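(* Let $\mu$ be an indeterminate admissible measure on $\mathbb{R}^d$ and let $\tau \neq 0$ be a positive measure of compact support on $\mathbb{R}^d$. Then the convolution $\tau \ast \mu$, defined by $\int f\, d(\tau\ast\mu)=\int\int f(x+y)\,d\tau(y)\,d\mu(x)$, is an admissible and indeterminate measure on $\mathbb{R}^d$.
   Context: An admissible measure on $\mathbb{R}^d$ is a positive Radon measure with all polynomials integrable; it is indeterminate if some distinct admissible measure has the same integrals against all polynomials. *)

theory Defs
  imports "HOL-Analysis.Analysis"
begin

text \<open>R^d is rendered as real^'n (d = CARD('n)). Monomial with multi-index alpha.\<close>

definition monomial :: "('n::finite \<Rightarrow> nat) \<Rightarrow> real^'n \<Rightarrow> real" where
  "monomial \<alpha> x = (\<Prod>i\<in>UNIV. (x $ i) ^ (\<alpha> i))"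

definition polynomial_fun :: "(real^'n::finite \<Rightarrow> real) \<Rightarrow> bool" where
  "polynomial_fun p \<longleftrightarrow>
     (\<exists>A c. finite A \<and> (\<forall>x. p x = (\<Sum>\<alpha>\<in>A. c \<alpha> * monomial \<alpha> x)))"

definition radon :: "(real^'n::finite) measure \<Rightarrow> bool" where
  "radon M \<longleftrightarrow> sets M = sets borel \<and> (\<forall>K. compact K \<longrightarrow> emeasure M K < \<infinity>)"

definition admissible :: "(real^'n::finite) measure \<Rightarrow> bool" where
  "admissible M \<longleftrightarrow> radon M \<and> (\<forall>p. polynomial_fun p \<longrightarrow> integrable M p)"

definition indeterminate :: "(real^'n::finite) measure \<Rightarrow> bool" where
  "indeterminate M \<longleftrightarrow> admissible M \<and>
     (\<exists>N. admissible N \<and> N \<noteq> M \<and>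
          (\<forall>p. polynomial_fun p \<longrightarrow> integral\<^sup>L N p = integral\<^sup>L M p))"

definition has_compact_support :: "(real^'n::finite) measure \<Rightarrow> bool" where
  "has_compact_support M \<longleftrightarrow> (\<exists>K. compact K \<and> emeasure M (UNIV - K) = 0)"

definition conv :: "(real^'n::finite) measure \<Rightarrow> (real^'n) measure \<Rightarrow> (real^'n) measure" where
  "conv \<tau> \<mu> = distr (\<tau> \<Otimes>\<^sub>M \<mu>) borel (\<lambda>(y, x). x + y)"

end

theory Submission
  imports Defs
begin


lemma monomial_mult: "monomial a x * monomial b x = monomial (\<lambda>i. a i + b i) x"
  unfolding monomial_def by (simp add: power_add prod.distrib)

lemma monomial_zero: "monomial (\<lambda>_. 0) x = 1"
  unfolding monomial_def by simp

lemma poly_const: "polynomial_fun (\<lambda>x. c)"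
  unfolding polynomial_fun_def
  by (rule exI[of _ "{\<lambda>_. 0}"], rule exI[of _ "\<lambda>_. c"]) (simp add: monomial_zero)

lemma poly_comp: "polynomial_fun (\<lambda>x::real^'n::finite. x $ i)"
proof -
  have "monomial (\<lambda>j. if j = i then 1 else 0) x = x $ i" for x :: "real^'n"
    unfolding monomial_def by (simp add: prod.delta' power_0 if_distrib cong: if_cong) 
  then show ?thesis unfolding polynomial_fun_def
    by (intro exI[of _ "{\<lambda>j. if j = i then 1 else 0}"] exI[of _ "\<lambda>_. 1"]) simp
qed

lemma sum_restrict_aux:
  assumes "finite A" "finite B"
  shows "(\<Sum>\<alpha>\<in>A\<union>B. (if \<alpha> \<in> A then c \<alpha> else 0) * (m \<alpha>::real)) = (\<Sum>\<alpha>\<in>A. c \<alpha> * m \<alpha>)"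
proof -
  have "(\<Sum>\<alpha>\<in>A\<union>B. (if \<alpha> \<in> A then c \<alpha> else 0) * m \<alpha>) = (\<Sum>\<alpha>\<in>A\<union>B. if \<alpha> \<in> A then c \<alpha> * m \<alpha> else 0)"
    by (rule sum.cong) simp_all
  also have "\<dots> = (\<Sum>\<alpha>\<in>(A\<union>B)\<inter>A. c \<alpha> * m \<alpha>)"
    using assms by (simp only: sum.inter_restrict finite_Un)
  also have "(A\<union>B)\<inter>A = A" by blast
  finally show ?thesis .
qed

lemma poly_add:
  assumes "polynomial_fun p" "polynomial_fun q"
  shows "polynomial_fun (\<lambda>x. p x + q x)"
proof -
  obtain A c where A: "finite A" "\<And>x. p x = (\<Sum>\<alpha>\<in>A. c \<alpha> * monomial \<alpha> x)"
    using assms(1) unfolding polynomial_fun_def by blast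
  obtain B d where B: "finite B" "\<And>x. q x = (\<Sum>\<alpha>\<in>B. d \<alpha> * monomial \<alpha> x)"
    using assms(2) unfolding polynomial_fun_def by blast
  let ?e = "\<lambda>\<alpha>. (if \<alpha> \<in> A then c \<alpha> else 0) + (if \<alpha> \<in> B then d \<alpha> else 0)"
  have "p x + q x = (\<Sum>\<alpha>\<in>A\<union>B. ?e \<alpha> * monomial \<alpha> x)" for x
  proof -
    have 1: "(\<Sum>\<alpha>\<in>A\<union>B. (if \<alpha> \<in> A then c \<alpha> else 0) * monomial \<alpha> x) = p x"
      unfolding A(2) using A(1) B(1) by (rule sum_restrict_aux)
    have 2: "(\<Sum>\<alpha>\<in>A\<union>B. (if \<alpha> \<in> B then d \<alpha> else 0) * monomial \<alpha> x) = q x"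
      unfolding B(2) using B(1) A(1) sum_restrict_aux[of B A d] by (simp only: Un_commute)
    show ?thesis unfolding distrib_right sum.distrib 1 2 ..
  qed
  then show ?thesis unfolding polynomial_fun_def using A(1) B(1)
    by (intro exI[of _ "A\<union>B"] exI[of _ ?e]) simp
qed
lemma poly_mult:
  assumes "polynomial_fun p" "polynomial_fun q"
  shows "polynomial_fun (\<lambda>x. p x * q x)"
proof -
  obtain A c where A: "finite A" "\<And>x. p x = (\<Sum>\<alpha>\<in>A. c \<alpha> * monomial \<alpha> x)"
    using assms(1) unfolding polynomial_fun_def by blast
  obtain B d where B: "finite B" "\<And>x. q x = (\<Sum>\<alpha>\<in>B. d \<alpha> * monomial \<alpha> x)"
    using assms(2) unfolding polynomial_fun_def by blast
  define g where "g = (\<lambda>(a::'a\<Rightarrow>nat, b::'a\<Rightarrow>nat). (\<lambda>i. a i + b i))"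
  define G where "G = g ` (A \<times> B)"
  define e where "e = (\<lambda>\<gamma>. \<Sum>z\<in>{z\<in>A\<times>B. g z = \<gamma>}. c (fst z) * d (snd z))"
  have fin: "finite (A \<times> B)" using A B by simp
  have "p x * q x = (\<Sum>\<gamma>\<in>G. e \<gamma> * monomial \<gamma> x)" for x
  proof -
    have "p x * q x = (\<Sum>a\<in>A. \<Sum>b\<in>B. c a * d b * monomial (g (a,b)) x)"
      unfolding A(2) B(2) sum_product g_def
      by (intro sum.cong refl) (simp add: monomial_mult[symmetric] mult_ac)
    also have "\<dots> = (\<Sum>z\<in>A\<times>B. c (fst z) * d (snd z) * monomial (g z) x)"
      unfolding sum.cartesian_product by (rule sum.cong) auto
    also have "\<dots> = (\<Sum>\<gamma>\<in>G. \<Sum>z\<in>{z\<in>A\<times>B. g z = \<gamma>}. c (fst z) * d (snd z) * monomial (g z) x)"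
      unfolding G_def by (rule sum.group[symmetric]) (use fin in auto)
    also have "\<dots> = (\<Sum>\<gamma>\<in>G. e \<gamma> * monomial \<gamma> x)"
      unfolding e_def sum_distrib_right by (rule sum.cong) auto
    finally show ?thesis .
  qed
  moreover have "finite G" unfolding G_def using fin by (intro finite_imageI)
  ultimately show ?thesis unfolding polynomial_fun_def
    by (intro exI[of _ G] exI[of _ e]) simp
qed

lemma poly_sum:
  assumes "finite S" "\<And>s. s \<in> S \<Longrightarrow> polynomial_fun (f s)"
  shows "polynomial_fun (\<lambda>x. \<Sum>s\<in>S. f s x)"
  using assms by (induction S rule: finite_induct) (auto intro: poly_add poly_const)

lemma poly_prod:
  assumes "finite S" "\<And>s. s \<in> S \<Longrightarrow> polynomial_fun (f s)"
  shows "polynomial_fun (\<lambda>x. \<Prod>s\<in>S. f s x)"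
  using assms by (induction S rule: finite_induct) (auto intro: poly_mult poly_const)

lemma poly_power:
  assumes "polynomial_fun p"
  shows "polynomial_fun (\<lambda>x. p x ^ k)"
  using assms by (induction k) (auto intro: poly_mult poly_const)

lemma poly_expand:
  assumes "polynomial_fun p"
  obtains A c where "finite A" "\<And>x. p x = (\<Sum>\<alpha>\<in>A. c \<alpha> * monomial \<alpha> x)"
  using assms unfolding polynomial_fun_def by blast

lemma poly_translate:
  assumes "polynomial_fun p"
  shows "polynomial_fun (\<lambda>x. p (x + y))"
proof -
  obtain A c where A: "finite A" "\<And>x. p x = (\<Sum>\<alpha>\<in>A. c \<alpha> * monomial \<alpha> x)"
    using assms poly_expand by blast
  have c: "polynomial_fun (\<lambda>x::real^'a. x $ i + y $ i)" for i
    by (rule poly_add[OF poly_comp poly_const])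
  have m: "polynomial_fun (\<lambda>x. monomial \<alpha> (x + y))" for \<alpha>
    unfolding monomial_def vector_add_component
    by (rule poly_prod) (auto intro: poly_power c)
  show ?thesis unfolding A(2)
    by (rule poly_sum[OF A(1)]) (rule poly_mult[OF poly_const m])
qed



lemma poly_continuous:
  assumes "polynomial_fun p"
  shows "continuous_on UNIV p"
proof -
  obtain A c where A: "finite A" "\<And>x. p x = (\<Sum>\<alpha>\<in>A. c \<alpha> * monomial \<alpha> x)"
    using assms poly_expand by blast
  have "p = (\<lambda>x. (\<Sum>\<alpha>\<in>A. c \<alpha> * (\<Prod>i\<in>UNIV. (x $ i) ^ (\<alpha> i))))"
    using A(2) unfolding monomial_def by auto
  moreover have "continuous_on UNIV (\<lambda>x::real^'a. (\<Sum>\<alpha>\<in>A. c \<alpha> * (\<Prod>i\<in>UNIV. (x $ i) ^ (\<alpha> i))))"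
    by (intro continuous_on_sum continuous_on_mult continuous_on_const continuous_on_prod continuous_on_power continuous_on_component continuous_on_id)
  ultimately show ?thesis by simp
qed

lemma poly_measurable:
  assumes "polynomial_fun p"
  shows "p \<in> borel_measurable borel"
  using poly_continuous[OF assms] by (rule borel_measurable_continuous_onI)

lemma abs_le_1_sq: "\<bar>t::real\<bar> \<le> 1 + t^2"
proof -
  have "0 \<le> (\<bar>t\<bar> - 1)^2" by simp
  then have "0 \<le> \<bar>t\<bar>^2 - 2 * \<bar>t\<bar> + 1" by (simp add: power2_eq_square algebra_simps)
  then show ?thesis by (simp add: power2_abs)
qed

lemma poly_bound:
  fixes p :: "real^'n::finite \<Rightarrow> real"
  assumes "polynomial_fun p" "compact K"
  obtains q where "polynomial_fun q" "\<And>x y. y \<in> K \<Longrightarrow> \<bar>p (x + y)\<bar> \<le> q x"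
proof -
  obtain A c where A: "finite A" "\<And>x. p x = (\<Sum>\<alpha>\<in>A. c \<alpha> * monomial \<alpha> x)"
    using assms poly_expand by blast
  obtain R where R: "\<And>y. y \<in> K \<Longrightarrow> norm y \<le> R"
    using compact_imp_bounded[OF assms(2)] bounded_iff by blast
  define B where "B = (\<lambda>x::real^'n. 1 + R + (\<Sum>i\<in>UNIV. (x $ i)^2))"
  define q where "q = (\<lambda>x. \<Sum>\<alpha>\<in>A. \<bar>c \<alpha>\<bar> * (\<Prod>i\<in>UNIV. B x ^ \<alpha> i))"
  have Bp: "polynomial_fun B" unfolding B_def
    by (intro poly_add poly_const poly_sum poly_power poly_comp) simp
  have qp: "polynomial_fun q" unfolding q_def
    by (rule poly_sum[OF A(1)], rule poly_mult[OF poly_const], rule poly_prod) (auto intro: poly_power Bp)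
  have comp: "\<bar>x $ i + y $ i\<bar> \<le> B x" if "y \<in> K" for x y i
  proof -
    have "\<bar>y $ i\<bar> \<le> R" using R[OF that] component_le_norm_cart[of y i] by linarith
    moreover have "\<bar>x $ i\<bar> \<le> 1 + (x $ i)^2"
      by (rule abs_le_1_sq)
    moreover have "(x $ i)^2 \<le> (\<Sum>j\<in>UNIV. (x $ j)^2)"
      by (rule member_le_sum) auto
    ultimately show ?thesis unfolding B_def by linarith
  qed
  have "\<bar>p (x + y)\<bar> \<le> q x" if "y \<in> K" for x y
  proof -
    have "\<bar>p (x + y)\<bar> \<le> (\<Sum>\<alpha>\<in>A. \<bar>c \<alpha> * monomial \<alpha> (x + y)\<bar>)"
      unfolding A(2) by (rule sum_abs)
    also have "\<dots> \<le> q x" unfolding q_def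
    proof (rule sum_mono)
      fix \<alpha> assume "\<alpha> \<in> A"
      have "\<bar>monomial \<alpha> (x + y)\<bar> = (\<Prod>i\<in>UNIV. \<bar>x $ i + y $ i\<bar> ^ \<alpha> i)"
        unfolding monomial_def by (simp add: abs_prod power_abs)
      also have "\<dots> \<le> (\<Prod>i\<in>UNIV. B x ^ \<alpha> i)"
        by (intro prod_mono conjI power_mono comp[OF that]) auto
      finally show "\<bar>c \<alpha> * monomial \<alpha> (x + y)\<bar> \<le> \<bar>c \<alpha>\<bar> * (\<Prod>i\<in>UNIV. B x ^ \<alpha> i)"
        unfolding abs_mult by (rule mult_left_mono) auto
    qed
    finally show ?thesis .
  qed
  with qp that show ?thesis by blast
qed



lemma L_snd:
  fixes h :: "'b \<Rightarrow> real"
  assumes "finite_measure M1" "finite_measure M2" "integrable M2 h"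
  shows "integrable (M1 \<Otimes>\<^sub>M M2) (\<lambda>z. h (snd z))"
    "integral\<^sup>L (M1 \<Otimes>\<^sub>M M2) (\<lambda>z. h (snd z)) = measure M1 (space M1) * integral\<^sup>L M2 h"
proof -
  interpret M1: finite_measure M1 by fact
  interpret M2: finite_measure M2 by fact
  interpret P: pair_sigma_finite M1 M2 ..
  have hm[measurable]: "h \<in> borel_measurable M2" using assms(3) by auto
  show int: "integrable (M1 \<Otimes>\<^sub>M M2) (\<lambda>z. h (snd z))"
    unfolding integrable_iff_bounded
  proof
    show "(\<lambda>z. h (snd z)) \<in> borel_measurable (M1 \<Otimes>\<^sub>M M2)" by measurable
    have "(\<integral>\<^sup>+ z. ennreal (norm (h (snd z))) \<partial>(M1 \<Otimes>\<^sub>M M2)) = (\<integral>\<^sup>+x. (\<integral>\<^sup>+y. ennreal (norm (h y)) \<partial>M2) \<partial>M1)"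
      using M2.nn_integral_fst[of "\<lambda>z. ennreal (norm (h (snd z)))" M1] by simp
    also have "\<dots> = (\<integral>\<^sup>+y. ennreal (norm (h y)) \<partial>M2) * emeasure M1 (space M1)"
      by (simp add: nn_integral_const mult.commute)
    also have "\<dots> < \<infinity>"
      using assms(3) unfolding integrable_iff_bounded
      by (simp add: ennreal_mult_eq_top_iff M1.emeasure_finite less_top[symmetric])
    finally show "(\<integral>\<^sup>+ z. ennreal (norm (h (snd z))) \<partial>(M1 \<Otimes>\<^sub>M M2)) < \<infinity>" .
  qed
  have "integral\<^sup>L (M1 \<Otimes>\<^sub>M M2) (\<lambda>z. h (snd z)) = (\<integral>x. (\<integral>y. h y \<partial>M2) \<partial>M1)"
    using P.integral_fst'[OF int] by simp
  also have "\<dots> = measure M1 (space M1) * integral\<^sup>L M2 h" by simp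
  finally show "integral\<^sup>L (M1 \<Otimes>\<^sub>M M2) (\<lambda>z. h (snd z)) = measure M1 (space M1) * integral\<^sup>L M2 h" .
qed

lemma L_fst:
  fixes h :: "'a \<Rightarrow> real"
  assumes "finite_measure M1" "finite_measure M2" "integrable M1 h"
  shows "integrable (M1 \<Otimes>\<^sub>M M2) (\<lambda>z. h (fst z))"
    "integral\<^sup>L (M1 \<Otimes>\<^sub>M M2) (\<lambda>z. h (fst z)) = measure M2 (space M2) * integral\<^sup>L M1 h"
proof -
  interpret M1: finite_measure M1 by fact
  interpret M2: finite_measure M2 by fact
  interpret P: pair_sigma_finite M1 M2 ..
  have hm[measurable]: "h \<in> borel_measurable M1" using assms(3) by auto
  show int: "integrable (M1 \<Otimes>\<^sub>M M2) (\<lambda>z. h (fst z))"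
    unfolding integrable_iff_bounded
  proof
    show "(\<lambda>z. h (fst z)) \<in> borel_measurable (M1 \<Otimes>\<^sub>M M2)" by measurable
    have "(\<integral>\<^sup>+ z. ennreal (norm (h (fst z))) \<partial>(M1 \<Otimes>\<^sub>M M2)) = (\<integral>\<^sup>+x. (\<integral>\<^sup>+y. ennreal (norm (h x)) \<partial>M2) \<partial>M1)"
      using M2.nn_integral_fst[of "\<lambda>z. ennreal (norm (h (fst z)))" M1] by simp
    also have "\<dots> = (\<integral>\<^sup>+x. ennreal (norm (h x)) \<partial>M1) * emeasure M2 (space M2)"
      by (simp add: nn_integral_const nn_integral_multc)
    also have "\<dots> < \<infinity>"
      using assms(3) unfolding integrable_iff_bounded
      by (simp add: ennreal_mult_eq_top_iff M2.emeasure_finite less_top[symmetric])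
    finally show "(\<integral>\<^sup>+ z. ennreal (norm (h (fst z))) \<partial>(M1 \<Otimes>\<^sub>M M2)) < \<infinity>" .
  qed
  have "integral\<^sup>L (M1 \<Otimes>\<^sub>M M2) (\<lambda>z. h (fst z)) = (\<integral>x. (\<integral>y. h x \<partial>M2) \<partial>M1)"
    using P.integral_fst'[OF int] by simp
  also have "\<dots> = measure M2 (space M2) * integral\<^sup>L M1 h" by (simp add: mult.commute)
  finally show "integral\<^sup>L (M1 \<Otimes>\<^sub>M M2) (\<lambda>z. h (fst z)) = measure M2 (space M2) * integral\<^sup>L M1 h" .
qed



lemma L_gen:
  fixes \<tau> :: "(real^'n::finite) measure" and R :: "'b measure"
    and G :: "(real^'n) \<times> 'b \<Rightarrow> real^'n" and f :: "real^'n \<Rightarrow> real" and h :: "'b \<Rightarrow> real"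
  assumes fin: "finite_measure \<tau>" "finite_measure R"
    and st: "sets \<tau> = sets borel"
    and K: "K \<in> sets borel" "emeasure \<tau> (UNIV - K) = 0"
    and G: "G \<in> measurable (\<tau> \<Otimes>\<^sub>M R) borel"
    and f: "f \<in> borel_measurable borel"
    and h: "integrable R h"
    and bnd: "\<And>y w. y \<in> K \<Longrightarrow> w \<in> space R \<Longrightarrow> \<bar>f (G (y,w))\<bar> \<le> h w"
  shows "integrable (distr (\<tau> \<Otimes>\<^sub>M R) borel G) f"
    "integral\<^sup>L (distr (\<tau> \<Otimes>\<^sub>M R) borel G) f = (\<integral>y. (\<integral>w. f (G (y,w)) \<partial>R) \<partial>\<tau>)"
    "integrable \<tau> (\<lambda>y. \<integral>w. f (G (y,w)) \<partial>R)"
proof -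
  interpret M1: finite_measure \<tau> by fact
  interpret M2: finite_measure R by fact
  interpret P: pair_sigma_finite \<tau> R ..
  have sp: "space \<tau> = UNIV" using sets_eq_imp_space_eq[OF st] by simp
  have UK: "UNIV - K \<in> sets \<tau>" using K(1) st by auto
  have null: "(UNIV - K) \<times> space R \<in> null_sets (\<tau> \<Otimes>\<^sub>M R)"
    using UK K(2) by (simp add: null_sets_def M2.emeasure_pair_measure_Times)
  have ae: "AE z in \<tau> \<Otimes>\<^sub>M R. fst z \<in> K"
    by (rule AE_I'[OF null]) (auto simp: space_pair_measure)
  have fG: "(\<lambda>z. f (G z)) \<in> borel_measurable (\<tau> \<Otimes>\<^sub>M R)"
    using measurable_comp[OF G f] by (simp add: comp_def)
  have int: "integrable (\<tau> \<Otimes>\<^sub>M R) (\<lambda>z. f (G z))"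
  proof (rule Bochner_Integration.integrable_bound[OF L_snd(1)[OF fin h] fG])
    show "AE z in \<tau> \<Otimes>\<^sub>M R. norm (f (G z)) \<le> norm (h (snd z))"
      using ae AE_space
    proof eventually_elim
      case (elim z)
      then have "snd z \<in> space R" by (auto simp: space_pair_measure)
      with bnd[OF elim(1) this] show ?case by (cases z) auto
    qed
  qed
  show "integrable (distr (\<tau> \<Otimes>\<^sub>M R) borel G) f"
    using int by (subst integrable_distr_eq[OF G f])
  have "integral\<^sup>L (distr (\<tau> \<Otimes>\<^sub>M R) borel G) f = integral\<^sup>L (\<tau> \<Otimes>\<^sub>M R) (\<lambda>z. f (G z))"
    by (rule integral_distr[OF G f])
  also have "\<dots> = (\<integral>y. (\<integral>w. f (G (y,w)) \<partial>R) \<partial>\<tau>)"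
    using P.integral_fst'[OF int] by simp
  finally show "integral\<^sup>L (distr (\<tau> \<Otimes>\<^sub>M R) borel G) f = (\<integral>y. (\<integral>w. f (G (y,w)) \<partial>R) \<partial>\<tau>)" .
  show "integrable \<tau> (\<lambda>y. \<integral>w. f (G (y,w)) \<partial>R)"
    using P.integrable_fst'[OF int] by simp
qed



lemma adm_basic:
  assumes "admissible M"
  shows "finite_measure M" "sets M = sets borel" "space M = UNIV"
proof -
  show st: "sets M = sets borel" using assms unfolding admissible_def radon_def by auto
  show "space M = UNIV" using sets_eq_imp_space_eq[OF st] by simp
  have "integrable M (\<lambda>_. 1::real)" using assms poly_const unfolding admissible_def by blast
  then have "(\<integral>\<^sup>+ x. ennreal (norm (1::real)) \<partial>M) < \<infinity>" unfolding integrable_iff_bounded by blast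
  then have "emeasure M (space M) \<noteq> \<infinity>" by (simp add: nn_integral_const)
  then show "finite_measure M" by (rule finite_measureI)
qed

lemma tau_basic:
  assumes "radon \<tau>" "has_compact_support \<tau>"
  shows "finite_measure \<tau>" "sets \<tau> = sets borel" "space \<tau> = UNIV"
proof -
  show st: "sets \<tau> = sets borel" using assms unfolding radon_def by auto
  show sp: "space \<tau> = UNIV" using sets_eq_imp_space_eq[OF st] by simp
  obtain K where K: "compact K" "emeasure \<tau> (UNIV - K) = 0"
    using assms(2) unfolding has_compact_support_def by blast
  have Ks: "K \<in> sets \<tau>" using st K(1) by (simp add: borel_closed compact_imp_closed)
  have "emeasure \<tau> (space \<tau>) \<le> emeasure \<tau> K + emeasure \<tau> (UNIV - K)"
    using emeasure_subadditive[of K \<tau> "UNIV - K"] Ks st sp by auto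
  also have "\<dots> < \<infinity>" using K assms(1) unfolding radon_def by simp
  finally show "finite_measure \<tau>" by (intro finite_measureI) simp
qed

lemma add_meas:
  assumes "sets M1 = sets (borel :: (real^'n::finite) measure)" "sets M2 = sets (borel :: (real^'n) measure)"
  shows "(\<lambda>(y, x). x + y) \<in> measurable (M1 \<Otimes>\<^sub>M M2) (borel :: (real^'n) measure)"
proof -
  have "(\<lambda>(y, x). x + y) \<in> measurable ((borel :: (real^'n) measure) \<Otimes>\<^sub>M borel) (borel :: (real^'n) measure)"
    by measurable
  moreover have "measurable (M1 \<Otimes>\<^sub>M M2) (borel :: (real^'n) measure) = measurable ((borel :: (real^'n) measure) \<Otimes>\<^sub>M borel) (borel :: (real^'n) measure)"
    by (rule measurable_cong_sets[OF sets_pair_measure_cong[OF assms] refl])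
  ultimately show ?thesis by simp
qed

lemma conv_admissible:
  fixes \<mu> \<tau> :: "(real^'n::finite) measure"
  assumes "admissible \<mu>" "radon \<tau>" "has_compact_support \<tau>"
  shows "admissible (conv \<tau> \<mu>)" "finite_measure (conv \<tau> \<mu>)"
proof -
  note mu = adm_basic[OF assms(1)]
  note ta = tau_basic[OF assms(2,3)]
  have G: "(\<lambda>(y, x). x + y) \<in> measurable (\<tau> \<Otimes>\<^sub>M \<mu>) (borel :: (real^'n) measure)"
    using add_meas ta(2) mu(2) by blast
  show fin: "finite_measure (conv \<tau> \<mu>)" unfolding conv_def
    using finite_measure.finite_measure_distr[OF finite_measure_pair_measure[OF mu(1) ta(1)] G] .
  obtain K where K: "compact K" "emeasure \<tau> (UNIV - K) = 0"
    using assms(3) unfolding has_compact_support_def by blast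
  have Kb: "K \<in> sets borel" using K(1) by (simp add: borel_closed compact_imp_closed)
  have "radon (conv \<tau> \<mu>)" unfolding radon_def
  proof
    show "sets (conv \<tau> \<mu>) = sets borel" unfolding conv_def by simp
    show "\<forall>K. compact K \<longrightarrow> emeasure (conv \<tau> \<mu>) K < \<infinity>"
      using finite_measure.emeasure_finite[OF fin] by (simp add: less_top)
  qed
  moreover have "integrable (conv \<tau> \<mu>) p" if p: "polynomial_fun p" for p
  proof -
    obtain q where q: "polynomial_fun q" "\<And>x y. y \<in> K \<Longrightarrow> \<bar>p (x + y)\<bar> \<le> q x"
      using poly_bound[OF p K(1)] by blast
    have "integrable \<mu> q" using assms(1) q(1) unfolding admissible_def by blast
    from L_gen(1)[OF ta(1) mu(1) ta(2) Kb K(2) G poly_measurable[OF p] this] q(2)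
    show ?thesis unfolding conv_def by simp
  qed
  ultimately show "admissible (conv \<tau> \<mu>)" unfolding admissible_def by blast
qed



lemma min1_lip: "\<bar>min 1 (a::real) - min 1 b\<bar> \<le> \<bar>a - b\<bar>"
  by (simp add: min_def)

lemma eq_from_lip:
  fixes \<mu> \<nu> :: "(real^'n::finite) measure"
  assumes fm: "finite_measure \<mu>" "finite_measure \<nu>"
    and st: "sets \<mu> = sets borel" "sets \<nu> = sets borel"
    and eq: "\<And>g L. (\<And>x. 0 \<le> g x \<and> g x \<le> 1) \<Longrightarrow> (\<And>a b. \<bar>g a - g b\<bar> \<le> L * dist a b)
             \<Longrightarrow> continuous_on UNIV g \<Longrightarrow> integral\<^sup>L \<mu> g = integral\<^sup>L \<nu> g"
  shows "\<mu> = \<nu>"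
proof -
  interpret M: finite_measure \<mu> by fact
  interpret N: finite_measure \<nu> by fact
  have sp: "space \<mu> = UNIV" "space \<nu> = UNIV"
    using sets_eq_imp_space_eq[OF st(1)] sets_eq_imp_space_eq[OF st(2)] by auto
  have opn: "measure \<mu> U = measure \<nu> U" if U: "open U" for U
  proof (cases "U = UNIV")
    case True
    have "integral\<^sup>L \<mu> (\<lambda>_. 1::real) = integral\<^sup>L \<nu> (\<lambda>_. 1)"
      by (rule eq[of _ 0]) auto
    then show ?thesis using True sp by simp
  next
    case False
    define S where "S = - U"
    have S: "closed S" "S \<noteq> {}" using U False unfolding S_def by auto
    define s where "s = (\<lambda>(k::nat) x. min 1 (real k * infdist x S))"
    have s_prop: "\<And>x. 0 \<le> s k x \<and> s k x \<le> 1" for k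
      unfolding s_def by (auto simp: infdist_nonneg)
    have s_lip: "\<bar>s k a - s k b\<bar> \<le> real k * dist a b" for k a b
    proof -
      have "\<bar>s k a - s k b\<bar> \<le> \<bar>real k * infdist a S - real k * infdist b S\<bar>"
        unfolding s_def by (rule min1_lip)
      also have "\<dots> = real k * \<bar>infdist a S - infdist b S\<bar>"
        by (simp add: abs_mult right_diff_distrib[symmetric])
      also have "\<dots> \<le> real k * dist a b"
        by (intro mult_left_mono infdist_triangle_abs) auto
      finally show ?thesis .
    qed
    have s_cont: "continuous_on UNIV (s k)" for k
      unfolding s_def by (intro continuous_on_min continuous_on_const continuous_on_mult continuous_on_infdist continuous_on_id)
    have s_meas: "s k \<in> borel_measurable borel" for k
      using s_cont by (rule borel_measurable_continuous_onI)
    have lim: "(\<lambda>k. s k x) \<longlonglongrightarrow> indicator U x" for x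
    proof (cases "x \<in> U")
      case True
      then have d: "infdist x S > 0" using S unfolding S_def by (intro infdist_pos_not_in_closed) auto
      obtain k0 :: nat where k0: "1 / infdist x S \<le> real k0" using real_arch_simple by blast
      have "eventually (\<lambda>k. s k x = 1) sequentially"
        unfolding eventually_sequentially
      proof (intro exI allI impI)
        fix k assume "k0 \<le> k"
        then have "1 / infdist x S \<le> real k" using k0 by linarith
        then have "1 \<le> real k * infdist x S" using d by (simp add: field_simps)
        then show "s k x = 1" unfolding s_def by simp
      qed
      then show ?thesis using True by (simp add: tendsto_eventually)
    next
      case False
      then have "x \<in> S" unfolding S_def by simp
      then have "s k x = 0" for k unfolding s_def by simp
      then show ?thesis using False by simp
    qed
    have conv: "(\<lambda>k. integral\<^sup>L M (s k)) \<longlonglongrightarrow> integral\<^sup>L M (indicator U :: _ \<Rightarrow> real)"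
      if "finite_measure M" "sets M = sets borel" for M :: "(real^'n) measure"
    proof (rule integral_dominated_convergence[where w="\<lambda>_. 1"])
      interpret finite_measure M by fact
      show "indicator U \<in> borel_measurable M"
        by (rule borel_measurable_indicator) (simp add: that(2) borel_open U)
      show "s k \<in> borel_measurable M" for k
        using s_meas[of k] measurable_cong_sets[OF that(2) refl[of "sets (borel::real measure)"]] by simp
      show "integrable M (\<lambda>_. 1::real)" by simp
      show "AE x in M. (\<lambda>k. s k x) \<longlonglongrightarrow> indicator U x" using lim by simp
      show "AE x in M. norm (s k x) \<le> 1" for k using s_prop[of k] by simp
    qed
    have "(\<lambda>k. integral\<^sup>L \<mu> (s k)) = (\<lambda>k. integral\<^sup>L \<nu> (s k))"
      using eq[OF s_prop s_lip s_cont] by simp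
    with conv[OF fm(1) st(1)] conv[OF fm(2) st(2)]
    have "integral\<^sup>L \<mu> (indicator U :: _ \<Rightarrow> real) = integral\<^sup>L \<nu> (indicator U)"
      using LIMSEQ_unique by metis
    then show ?thesis using sp by simp
  qed
  show ?thesis
  proof (rule measure_eqI_generator_eq[where E="{S. open S}" and \<Omega>=UNIV and A="\<lambda>_. UNIV"])
    show "Int_stable {S :: (real^'n) set. open S}" by (auto simp: Int_stable_def)
    show "{S :: (real^'n) set. open S} \<subseteq> Pow UNIV" by auto
    show "emeasure \<mu> X = emeasure \<nu> X" if "X \<in> {S. open S}" for X
      using opn[of X] that st by (simp add: M.emeasure_eq_measure N.emeasure_eq_measure borel_open)
    show "sets \<mu> = sigma_sets UNIV {S. open S}" using st(1) sets_borel by simp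
    show "sets \<nu> = sigma_sets UNIV {S. open S}" using st(2) sets_borel by simp
    show "range (\<lambda>_. UNIV) \<subseteq> {S :: (real^'n) set. open S}" by auto
    show "(\<Union>i. UNIV) = (UNIV :: (real^'n) set)" by simp
    show "emeasure \<mu> UNIV \<noteq> \<infinity>" for i :: nat using M.emeasure_finite by simp
  qed
qed



lemma support_point:
  fixes \<tau> :: "(real^'n::finite) measure"
  assumes st: "sets \<tau> = sets borel" and K: "compact K" "emeasure \<tau> (UNIV - K) = 0"
    and nz: "emeasure \<tau> (space \<tau>) \<noteq> 0"
  shows "\<exists>y0. \<forall>r>0. emeasure \<tau> (ball y0 r) \<noteq> 0"
proof (rule ccontr)
  assume "\<not> ?thesis"
  then have "\<forall>y. \<exists>r. r > 0 \<and> emeasure \<tau> (ball y r) = 0" by auto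
  then have "\<exists>r. \<forall>y. r y > 0 \<and> emeasure \<tau> (ball y (r y)) = 0" by (rule choice)
  then obtain r where r0: "\<forall>y. r y > 0 \<and> emeasure \<tau> (ball y (r y)) = 0" by blast
  have r: "\<And>y. r y > 0" "\<And>y. emeasure \<tau> (ball y (r y)) = 0" using r0 by auto
  have sp: "space \<tau> = UNIV" using sets_eq_imp_space_eq[OF st] by simp
  have cov: "K \<subseteq> (\<Union>y\<in>K. ball y (r y))" using r(1) by auto
  have "\<exists>C. C \<subseteq> K \<and> finite C \<and> K \<subseteq> (\<Union>y\<in>C. ball y (r y))"
    by (rule compactE_image[OF K(1) _ cov]) auto
  then obtain C where C: "C \<subseteq> K" "finite C" "K \<subseteq> (\<Union>y\<in>C. ball y (r y))" by (elim exE conjE)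
  have bs: "(\<lambda>y. ball y (r y)) ` C \<subseteq> sets \<tau>" unfolding st by (auto intro: borel_open)
  have "emeasure \<tau> K \<le> emeasure \<tau> (\<Union>y\<in>C. ball y (r y))"
    by (rule emeasure_mono[OF C(3)]) (rule sets.finite_UN[OF C(2)], use bs in blast)
  also have "\<dots> \<le> (\<Sum>y\<in>C. emeasure \<tau> (ball y (r y)))"
    by (rule emeasure_subadditive_finite[OF C(2) bs])
  also have "\<dots> = 0" using r(2) by simp
  finally have K0: "emeasure \<tau> K = 0" by simp
  have Ks: "K \<in> sets \<tau>" using st K(1) by (simp add: borel_closed compact_imp_closed)
  have "emeasure \<tau> (space \<tau>) \<le> emeasure \<tau> K + emeasure \<tau> (UNIV - K)"
    using emeasure_subadditive[of K \<tau> "UNIV - K"] Ks st sp by auto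
  with K0 K(2) nz show False by simp
qed



lemma Q_props:
  fixes \<nu> :: "'a measure"
  assumes fin: "finite_measure \<nu>" and c: "c \<ge> 0"
  shows "finite_measure (density \<nu> (\<lambda>_. ennreal c))"
    "\<And>g::'a\<Rightarrow>real. integrable \<nu> g \<Longrightarrow> integrable (density \<nu> (\<lambda>_. ennreal c)) g"
    "\<And>g::'a\<Rightarrow>real. g \<in> borel_measurable \<nu> \<Longrightarrow> integral\<^sup>L (density \<nu> (\<lambda>_. ennreal c)) g = c * integral\<^sup>L \<nu> g"
    "measure (density \<nu> (\<lambda>_. ennreal c)) (space \<nu>) = c * measure \<nu> (space \<nu>)"
proof -
  interpret finite_measure \<nu> by fact
  show fd: "finite_measure (density \<nu> (\<lambda>_. ennreal c))"
  proof (rule finite_measureI)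
    have "emeasure (density \<nu> (\<lambda>_. ennreal c)) (space (density \<nu> (\<lambda>_. ennreal c)))
        = (\<integral>\<^sup>+ x. ennreal c * indicator (space \<nu>) x \<partial>\<nu>)"
      by (simp add: emeasure_density)
    also have "\<dots> = (\<integral>\<^sup>+ x. ennreal c \<partial>\<nu>)" by (intro nn_integral_cong) simp
    also have "\<dots> = ennreal c * emeasure \<nu> (space \<nu>)" by (simp add: nn_integral_const)
    also have "\<dots> \<noteq> \<infinity>" by (simp add: ennreal_mult_eq_top_iff emeasure_finite)
    finally show "emeasure (density \<nu> (\<lambda>_. ennreal c)) (space (density \<nu> (\<lambda>_. ennreal c))) \<noteq> \<infinity>" .
  qed
  show "integrable (density \<nu> (\<lambda>_. ennreal c)) g" if "integrable \<nu> g" for g :: "'a \<Rightarrow> real"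
  proof -
    have "integrable \<nu> (\<lambda>x. c *\<^sub>R g x)" using that by simp
    then show ?thesis using that
      by (subst integrable_density[where g="\<lambda>_. c"]) (auto simp: c)
  qed
  show ig: "integral\<^sup>L (density \<nu> (\<lambda>_. ennreal c)) g = c * integral\<^sup>L \<nu> g"
    if "g \<in> borel_measurable \<nu>" for g :: "'a \<Rightarrow> real"
    using integral_density[where g="\<lambda>_. c" and f=g and M=\<nu>] that c by simp
  have "integral\<^sup>L (density \<nu> (\<lambda>_. ennreal c)) (\<lambda>_. 1::real) = c * integral\<^sup>L \<nu> (\<lambda>_. 1)"
    by (rule ig) simp
  then show "measure (density \<nu> (\<lambda>_. ennreal c)) (space \<nu>) = c * measure \<nu> (space \<nu>)"
    by simp
qed



lemma int_translate:
  fixes M :: "(real^'n::finite) measure" and f q :: "real^'n \<Rightarrow> real"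
  assumes "sets M = sets borel" "f \<in> borel_measurable borel" "integrable M q"
    "\<And>x. \<bar>f (x + y)\<bar> \<le> q x"
  shows "integrable M (\<lambda>x. f (x + y))"
proof (rule Bochner_Integration.integrable_bound[OF assms(3)])
  have "(\<lambda>x. f (x + y)) \<in> borel_measurable borel" using assms(2) by measurable
  then show "(\<lambda>x. f (x + y)) \<in> borel_measurable M"
    using measurable_cong_sets[OF assms(1) refl[of "sets (borel::real measure)"]] by simp
  show "AE x in M. norm (f (x + y)) \<le> norm (q x)"
  proof (intro AE_I2)
    fix x show "norm (f (x + y)) \<le> norm (q x)" using assms(4)[of x] by simp
  qed
qed

lemma L_N:
  fixes \<tau> \<mu> \<nu> :: "(real^'n::finite) measure" and f q :: "real^'n \<Rightarrow> real"
  assumes fin: "finite_measure \<tau>" "finite_measure \<mu>" "finite_measure \<nu>"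
    and st: "sets \<tau> = sets borel" "sets \<mu> = sets borel" "sets \<nu> = sets borel"
    and K: "K \<in> sets borel" "emeasure \<tau> (UNIV - K) = 0"
    and A[measurable]: "A \<in> sets borel"
    and c: "c \<ge> 0" "c * measure \<mu> UNIV = 1" "measure \<nu> UNIV = measure \<mu> UNIV"
    and f[measurable]: "f \<in> borel_measurable borel"
    and q: "integrable \<mu> q" "integrable \<nu> q"
    and bnd: "\<And>x y. y \<in> K \<Longrightarrow> \<bar>f (x + y)\<bar> \<le> q x"
  defines "N \<equiv> distr (\<tau> \<Otimes>\<^sub>M (\<mu> \<Otimes>\<^sub>M density \<nu> (\<lambda>_. ennreal c))) borel
                 (\<lambda>(y,(x,x')). if y \<in> A then x' + y else x + y)"
  shows "integrable N f"
    "integral\<^sup>L N f = (\<integral>y. (\<integral>x. f (x+y) \<partial>\<mu>) + indicator A y * ((\<integral>x. f (x+y) \<partial>\<nu>) - (\<integral>x. f (x+y) \<partial>\<mu>)) \<partial>\<tau>)"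
    "integrable \<tau> (\<lambda>y. \<integral>x. f (x+y) \<partial>\<mu>)" "integrable \<tau> (\<lambda>y. \<integral>x. f (x+y) \<partial>\<nu>)"
    "integral\<^sup>L (conv \<tau> \<mu>) f = (\<integral>y. (\<integral>x. f (x+y) \<partial>\<mu>) \<partial>\<tau>)"
    "finite_measure N"
proof -
  have sp: "space \<tau> = UNIV" "space \<mu> = UNIV" "space \<nu> = UNIV"
    using st sets_eq_imp_space_eq by (metis space_borel)+
  have Gm: "(\<lambda>(y, x). x + y) \<in> measurable (\<tau> \<Otimes>\<^sub>M \<mu>) (borel :: (real^'n) measure)"
    using add_meas st by blast
  have Gn: "(\<lambda>(y, x). x + y) \<in> measurable (\<tau> \<Otimes>\<^sub>M \<nu>) (borel :: (real^'n) measure)"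
    using add_meas st by blast
  note Lm = L_gen[OF fin(1) fin(2) st(1) K Gm f q(1)]
  note Ln = L_gen[OF fin(1) fin(3) st(1) K Gn f q(2)]
  show Hm: "integrable \<tau> (\<lambda>y. \<integral>x. f (x+y) \<partial>\<mu>)" using Lm(3) bnd by simp
  show Hn: "integrable \<tau> (\<lambda>y. \<integral>x. f (x+y) \<partial>\<nu>)" using Ln(3) bnd by simp
  show "integral\<^sup>L (conv \<tau> \<mu>) f = (\<integral>y. (\<integral>x. f (x+y) \<partial>\<mu>) \<partial>\<tau>)"
    using Lm(2) bnd unfolding conv_def by simp
  define Q where "Q = density \<nu> (\<lambda>_. ennreal c)"
  note Qp = Q_props[OF fin(3) c(1), folded Q_def]
  have stQ: "sets Q = sets borel" unfolding Q_def using st(3) by simp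
  have spQ: "space Q = UNIV" unfolding Q_def using sp by simp
  define R where "R = \<mu> \<Otimes>\<^sub>M Q"
  have finR: "finite_measure R" unfolding R_def by (rule finite_measure_pair_measure[OF Qp(1) fin(2)])
  define G where "G = (\<lambda>(y::real^'n,(x::real^'n,x'::real^'n)). if y \<in> A then x' + y else x + y)"
  have "G \<in> measurable ((borel :: (real^'n) measure) \<Otimes>\<^sub>M ((borel :: (real^'n) measure) \<Otimes>\<^sub>M (borel :: (real^'n) measure))) (borel :: (real^'n) measure)"
    unfolding G_def by measurable
  moreover have "sets (\<tau> \<Otimes>\<^sub>M R) = sets ((borel :: (real^'n) measure) \<Otimes>\<^sub>M ((borel :: (real^'n) measure) \<Otimes>\<^sub>M (borel :: (real^'n) measure)))"
    unfolding R_def by (intro sets_pair_measure_cong st stQ)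
  ultimately have GN: "G \<in> measurable (\<tau> \<Otimes>\<^sub>M R) (borel :: (real^'n) measure)"
    using measurable_cong_sets[OF _ refl[of "sets (borel :: (real^'n) measure)"]] by metis
  have qQ: "integrable Q q" using Qp(2)[OF q(2)] .
  define h where "h = (\<lambda>w::(real^'n) \<times> (real^'n). q (fst w) + q (snd w))"
  have hint: "integrable R h" unfolding h_def R_def
    by (intro Bochner_Integration.integrable_add L_fst(1)[OF fin(2) Qp(1) q(1)] L_snd(1)[OF fin(2) Qp(1) qQ])
  have bnd2: "\<bar>f (G (y,w))\<bar> \<le> h w" if "y \<in> K" for y w
  proof -
    obtain x x' where w: "w = (x, x')" by (cases w)
    have 1: "\<bar>f (x + y)\<bar> \<le> q x" "\<bar>f (x' + y)\<bar> \<le> q x'" using bnd[OF that] by auto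
    then show ?thesis unfolding G_def h_def w by auto
  qed
  note LN = L_gen[OF fin(1) finR st(1) K GN f hint bnd2]
  show "integrable N f" using LN(1) unfolding N_def G_def R_def Q_def .
  show "finite_measure N" unfolding N_def
    using finite_measure.finite_measure_distr[OF finite_measure_pair_measure[OF finR fin(1)] GN]
    unfolding G_def R_def Q_def .
  have "integral\<^sup>L N f = (\<integral>y. (\<integral>w. f (G (y,w)) \<partial>R) \<partial>\<tau>)"
    using LN(2) unfolding N_def G_def R_def Q_def .
  also have "\<dots> = (\<integral>y. (\<integral>x. f (x+y) \<partial>\<mu>) + indicator A y * ((\<integral>x. f (x+y) \<partial>\<nu>) - (\<integral>x. f (x+y) \<partial>\<mu>)) \<partial>\<tau>)"
  proof (rule integral_cong_AE)
    show "(\<lambda>y. \<integral>w. f (G (y,w)) \<partial>R) \<in> borel_measurable \<tau>" using LN(3) by auto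
    have [measurable]: "(\<lambda>y. \<integral>x. f (x+y) \<partial>\<mu>) \<in> borel_measurable \<tau>" using Hm by auto
    have [measurable]: "(\<lambda>y. \<integral>x. f (x+y) \<partial>\<nu>) \<in> borel_measurable \<tau>" using Hn by auto
    have [measurable]: "A \<in> sets \<tau>" using st by simp
    show "(\<lambda>y. (\<integral>x. f (x+y) \<partial>\<mu>) + indicator A y * ((\<integral>x. f (x+y) \<partial>\<nu>) - (\<integral>x. f (x+y) \<partial>\<mu>))) \<in> borel_measurable \<tau>"
      by measurable
    have UK: "UNIV - K \<in> null_sets \<tau>" using K st by (simp add: null_sets_def)
    have ae: "AE y in \<tau>. y \<in> K" by (rule AE_I'[OF UK]) auto
    show "AE y in \<tau>. (\<integral>w. f (G (y,w)) \<partial>R) = (\<integral>x. f (x+y) \<partial>\<mu>) + indicator A y * ((\<integral>x. f (x+y) \<partial>\<nu>) - (\<integral>x. f (x+y) \<partial>\<mu>))"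
      using ae
    proof eventually_elim
      case (elim y)
      have im: "integrable \<mu> (\<lambda>x. f (x + y))" by (rule int_translate[OF st(2) f q(1) bnd[OF elim]])
      have inu: "integrable \<nu> (\<lambda>x. f (x + y))" by (rule int_translate[OF st(3) f q(2) bnd[OF elim]])
      show ?case
      proof (cases "y \<in> A")
        case True
        have "(\<integral>w. f (G (y,w)) \<partial>R) = (\<integral>w. f (snd w + y) \<partial>R)"
          unfolding G_def using True by (intro Bochner_Integration.integral_cong refl) (auto simp: split_beta)
        also have "\<dots> = measure \<mu> (space \<mu>) * integral\<^sup>L Q (\<lambda>x. f (x + y))"
          unfolding R_def by (rule L_snd(2)[OF fin(2) Qp(1) Qp(2)[OF inu]])
        also have "\<dots> = measure \<mu> UNIV * (c * (\<integral>x. f (x+y) \<partial>\<nu>))"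
          using Qp(3)[of "\<lambda>x. f (x + y)"] inu sp by auto
        also have "\<dots> = (\<integral>x. f (x+y) \<partial>\<nu>)" using c(2) by (simp add: mult.assoc[symmetric] mult.commute)
        finally show ?thesis using True by simp
      next
        case False
        have "(\<integral>w. f (G (y,w)) \<partial>R) = (\<integral>w. f (fst w + y) \<partial>R)"
          unfolding G_def using False by (intro Bochner_Integration.integral_cong refl) (auto simp: split_beta)
        also have "\<dots> = measure Q (space Q) * (\<integral>x. f (x+y) \<partial>\<mu>)"
          unfolding R_def by (rule L_fst(2)[OF fin(2) Qp(1) im])
        also have "measure Q (space Q) = 1" using Qp(4) c sp unfolding Q_def by simp
        finally show ?thesis using False by simp
      qed
    qed
  qed
  finally show "integral\<^sup>L N f = (\<integral>y. (\<integral>x. f (x+y) \<partial>\<mu>) + indicator A y * ((\<integral>x. f (x+y) \<partial>\<nu>) - (\<integral>x. f (x+y) \<partial>\<mu>)) \<partial>\<tau>)" .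
qed



lemma avg_lemma:
  fixes \<tau> :: "(real^'n::finite) measure" and D :: "real^'n \<Rightarrow> real"
  assumes fin: "finite_measure \<tau>" and st: "sets \<tau> = sets borel" and D: "integrable \<tau> D"
    and z: "\<And>r. r > 0 \<Longrightarrow> (\<integral>y. indicator (ball y0 r) y * D y \<partial>\<tau>) = 0"
    and pos: "\<And>r. r > 0 \<Longrightarrow> emeasure \<tau> (ball y0 r) \<noteq> 0"
    and cl: "\<And>r y. r > 0 \<Longrightarrow> y \<in> ball y0 r \<Longrightarrow> \<bar>D y - \<Delta>\<bar> \<le> C * r"
  shows "\<Delta> = 0"
proof -
  interpret finite_measure \<tau> by fact
  have sp: "space \<tau> = UNIV" using sets_eq_imp_space_eq[OF st] by simp
  have bnd: "\<bar>\<Delta>\<bar> \<le> C * r" if r: "r > 0" for r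
  proof -
    let ?A = "ball y0 r"
    have As: "?A \<in> sets \<tau>" using st by simp
    have iA: "integrable \<tau> (\<lambda>y. indicator ?A y * D y)"
      using integrable_real_mult_indicator[OF As D] by (simp add: mult.commute)
    have iA2: "integrable \<tau> (\<lambda>y. indicator ?A y * \<Delta>)"
      using integrable_real_mult_indicator[OF As integrable_const[of \<Delta>]] by (simp add: mult.commute)
    have iA3: "integrable \<tau> (\<lambda>y. indicator ?A y * (C * r))"
      using integrable_real_mult_indicator[OF As integrable_const[of "C * r"]] by (simp add: mult.commute)
    have mA: "measure \<tau> ?A > 0"
      using pos[OF r] emeasure_eq_measure[of ?A] by (simp add: zero_less_measure_iff)
    have "(\<integral>y. indicator ?A y * (D y - \<Delta>) \<partial>\<tau>) = (\<integral>y. indicator ?A y * D y \<partial>\<tau>) - (\<integral>y. indicator ?A y * \<Delta> \<partial>\<tau>)"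
      using iA iA2 by (simp add: right_diff_distrib Bochner_Integration.integral_diff)
    also have "\<dots> = - (measure \<tau> ?A * \<Delta>)" using z[OF r] As sp by (simp add: mult.commute)
    finally have e: "(\<integral>y. indicator ?A y * (D y - \<Delta>) \<partial>\<tau>) = - (measure \<tau> ?A * \<Delta>)" .
    have "\<bar>\<integral>y. indicator ?A y * (D y - \<Delta>) \<partial>\<tau>\<bar> \<le> (\<integral>y. indicator ?A y * (C * r) \<partial>\<tau>)"
    proof (rule integral_abs_bound_integral)
      show "integrable \<tau> (\<lambda>y. indicator ?A y * (D y - \<Delta>))"
        using iA iA2 by (simp add: right_diff_distrib)
      show "integrable \<tau> (\<lambda>y. indicator ?A y * (C * r))" by (rule iA3)
      show "\<bar>indicator ?A y * (D y - \<Delta>)\<bar> \<le> indicator ?A y * (C * r)" for y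
        using cl[OF r, of y] by (auto split: split_indicator)
    qed
    also have "\<dots> = measure \<tau> ?A * (C * r)" using As by simp
    finally have "measure \<tau> ?A * \<bar>\<Delta>\<bar> \<le> measure \<tau> ?A * (C * r)"
      using e by (simp add: abs_mult)
    then show ?thesis using mA by simp
  qed
  show ?thesis
  proof (rule ccontr)
    assume "\<Delta> \<noteq> 0"
    then have d: "\<bar>\<Delta>\<bar> > 0" by simp
    show False
    proof (cases "C \<le> 0")
      case True
      then have "C * 1 \<le> 0" by simp
      with bnd[of 1] d show False by simp
    next
      case False
      then have "\<bar>\<Delta>\<bar> \<le> C * (\<bar>\<Delta>\<bar> / (2 * C))" using bnd[of "\<bar>\<Delta>\<bar> / (2 * C)"] d by simp
      also have "\<dots> = \<bar>\<Delta>\<bar> / 2" using False by simp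
      finally show False using d by simp
    qed
  qed
qed



theorem mainTheorem15:
  fixes \<mu> \<tau> :: "(real^'n::finite) measure"
  assumes "indeterminate \<mu>"
    and "radon \<tau>"
    and "has_compact_support \<tau>"
    and "emeasure \<tau> (space \<tau>) \<noteq> 0"
  shows "admissible (conv \<tau> \<mu>) \<and> indeterminate (conv \<tau> \<mu>)"
proof -
  have madm: "admissible \<mu>" using assms(1) unfolding indeterminate_def by blast
  obtain \<nu> where nu: "admissible \<nu>" "\<nu> \<noteq> \<mu>" "\<And>p. polynomial_fun p \<Longrightarrow> integral\<^sup>L \<nu> p = integral\<^sup>L \<mu> p"
    using assms(1) unfolding indeterminate_def by blast
  note mu = adm_basic[OF madm]
  note nu' = adm_basic[OF nu(1)]
  note ta = tau_basic[OF assms(2,3)]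
  obtain K where K: "compact K" "emeasure \<tau> (UNIV - K) = 0"
    using assms(3) unfolding has_compact_support_def by blast
  have Kb: "K \<in> sets borel" using K(1) by (simp add: borel_closed compact_imp_closed)
  have cadm: "admissible (conv \<tau> \<mu>)" by (rule conv_admissible(1)[OF madm assms(2,3)])
  define m where "m = measure \<mu> UNIV"
  have mnu: "measure \<nu> UNIV = measure \<mu> UNIV"
    using nu(3)[OF poly_const[of 1]] mu(3) nu'(3) by simp
  have mpos: "m > 0"
  proof (rule ccontr)
    assume "\<not> m > 0"
    then have m0: "m = 0" using measure_nonneg[of \<mu> UNIV] unfolding m_def by linarith
    have "\<mu> = \<nu>"
    proof (rule measure_eqI)
      show "sets \<mu> = sets \<nu>" using mu(2) nu'(2) by simp
      fix X assume X: "X \<in> sets \<mu>"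
      have "measure \<mu> X \<le> measure \<mu> UNIV"
        using finite_measure.bounded_measure[OF mu(1), of X] mu(3) by simp
      then have a: "measure \<mu> X = 0" using m0 measure_nonneg[of \<mu> X] unfolding m_def by linarith
      have X': "X \<in> sets \<nu>" using X mu(2) nu'(2) by simp
      have "measure \<nu> X \<le> measure \<nu> UNIV"
        using finite_measure.bounded_measure[OF nu'(1), of X] nu'(3) by simp
      then have b: "measure \<nu> X = 0" using m0 mnu measure_nonneg[of \<nu> X] unfolding m_def by linarith
      show "emeasure \<mu> X = emeasure \<nu> X"
        using a b finite_measure.emeasure_eq_measure[OF mu(1), of X] finite_measure.emeasure_eq_measure[OF nu'(1), of X]
        by simp
    qed
    with nu(2) show False by simp
  qed
  define c where "c = 1 / m"
  have cge: "c \<ge> 0" unfolding c_def using mpos by simp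
  have cm: "c * measure \<mu> UNIV = 1" unfolding c_def m_def using mpos unfolding m_def by simp
  obtain y0 where y0: "\<And>r. r > 0 \<Longrightarrow> emeasure \<tau> (ball y0 r) \<noteq> 0"
    using support_point[OF ta(2) K assms(4)] by blast
  define NA where "NA = (\<lambda>A. distr (\<tau> \<Otimes>\<^sub>M (\<mu> \<Otimes>\<^sub>M density \<nu> (\<lambda>_. ennreal c))) borel
                 (\<lambda>(y,(x,x')). if y \<in> A then x' + y else x + y))"
  have q1: "integrable \<mu> (\<lambda>_. 1::real)" "integrable \<nu> (\<lambda>_. 1::real)"
    using finite_measure.integrable_const[OF mu(1)] finite_measure.integrable_const[OF nu'(1)] by auto
  show ?thesis
  proof (rule ccontr)
    assume H: "\<not> (admissible (conv \<tau> \<mu>) \<and> indeterminate (conv \<tau> \<mu>))"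
    have H': "N = conv \<tau> \<mu>" if "admissible N" "\<And>p. polynomial_fun p \<Longrightarrow> integral\<^sup>L N p = integral\<^sup>L (conv \<tau> \<mu>) p" for N
    proof -
      have "\<not> indeterminate (conv \<tau> \<mu>)" using H cadm by blast
      then have "\<not> (\<exists>N. admissible N \<and> N \<noteq> conv \<tau> \<mu> \<and> (\<forall>p. polynomial_fun p \<longrightarrow> integral\<^sup>L N p = integral\<^sup>L (conv \<tau> \<mu>) p))"
        using cadm unfolding indeterminate_def by simp
      then show ?thesis using that by blast
    qed
    have NAeq: "NA (ball y0 r) = conv \<tau> \<mu>" if r: "r > 0" for r
    proof (rule H')
      let ?A = "ball y0 r"
      have Ab: "?A \<in> sets borel" by simp
      have f0: "(\<lambda>_. 0::real) \<in> borel_measurable (borel :: (real^'n) measure)" by simp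
      have q0: "integrable \<mu> (\<lambda>_. 0::real)" "integrable \<nu> (\<lambda>_. 0::real)" by simp_all
      have b0: "\<bar>(\<lambda>_. 0::real) (x + y)\<bar> \<le> (\<lambda>_. 0::real) x" if "y \<in> K" for x y :: "real^'n" by simp
      have fin: "finite_measure (NA ?A)"
        using L_N(6)[OF ta(1) mu(1) nu'(1) ta(2) mu(2) nu'(2) Kb K(2) Ab cge cm mnu f0 q0 b0]
        unfolding NA_def .
      have "radon (NA ?A)" unfolding radon_def
      proof
        show "sets (NA ?A) = sets borel" unfolding NA_def by simp
        show "\<forall>K. compact K \<longrightarrow> emeasure (NA ?A) K < \<infinity>"
          using finite_measure.emeasure_finite[OF fin] by (simp add: less_top)
      qed
      moreover have "integrable (NA ?A) p" if p: "polynomial_fun p" for p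
      proof -
        obtain q where q: "polynomial_fun q" "\<And>x y. y \<in> K \<Longrightarrow> \<bar>p (x + y)\<bar> \<le> q x"
          using poly_bound[OF p K(1)] by blast
        have "integrable \<mu> q" "integrable \<nu> q" using madm nu(1) q(1) unfolding admissible_def by blast+
        from L_N(1)[OF ta(1) mu(1) nu'(1) ta(2) mu(2) nu'(2) Kb K(2) Ab cge cm mnu poly_measurable[OF p] this q(2)]
        show ?thesis unfolding NA_def .
      qed
      ultimately show "admissible (NA ?A)" unfolding admissible_def by blast
      fix p :: "real^'n \<Rightarrow> real" assume p: "polynomial_fun p"
      obtain q where q: "polynomial_fun q" "\<And>x y. y \<in> K \<Longrightarrow> \<bar>p (x + y)\<bar> \<le> q x"
        using poly_bound[OF p K(1)] by blast
      have "integrable \<mu> q" "integrable \<nu> q" using madm nu(1) q(1) unfolding admissible_def by blast+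
      note L = L_N[OF ta(1) mu(1) nu'(1) ta(2) mu(2) nu'(2) Kb K(2) Ab cge cm mnu poly_measurable[OF p] this q(2)]
      have eqy: "(\<integral>x. p (x + y) \<partial>\<nu>) = (\<integral>x. p (x + y) \<partial>\<mu>)" for y
        by (rule nu(3)[OF poly_translate[OF p]])
      show "integral\<^sup>L (NA ?A) p = integral\<^sup>L (conv \<tau> \<mu>) p"
        using L(2) L(5) eqy unfolding NA_def by simp
    qed
    have lip: "integral\<^sup>L \<mu> g = integral\<^sup>L \<nu> g"
      if g: "\<And>x. 0 \<le> g x \<and> g x \<le> 1" "\<And>a b. \<bar>g a - g b\<bar> \<le> L * dist a b" "continuous_on UNIV g" for g L
    proof -
      define f where "f = (\<lambda>z. g (z - y0))"
      have gm[measurable]: "g \<in> borel_measurable borel" using g(3) by (rule borel_measurable_continuous_onI)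
      have fm: "f \<in> borel_measurable borel" unfolding f_def by measurable
      have fb: "\<bar>f (x + y)\<bar> \<le> 1" if "y \<in> K" for x y using g(1)[of "x + y - y0"] unfolding f_def by simp
      define Hm where "Hm = (\<lambda>y. \<integral>x. f (x + y) \<partial>\<mu>)"
      define Hn where "Hn = (\<lambda>y. \<integral>x. f (x + y) \<partial>\<nu>)"
      have fint: "integrable MM (\<lambda>x. f (x + y))" if "sets MM = sets borel" "integrable MM (\<lambda>_. 1::real)" for MM y
        by (rule int_translate[OF that(1) fm that(2)]) (use g(1) in \<open>simp add: f_def\<close>)
      have intH: "integrable \<tau> Hm" "integrable \<tau> Hn"
        using L_N(3,4)[OF ta(1) mu(1) nu'(1) ta(2) mu(2) nu'(2) Kb K(2) _ cge cm mnu fm q1 fb, of "{}"]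
        unfolding Hm_def Hn_def by simp_all
      have z: "(\<integral>y. indicator (ball y0 r) y * (Hn y - Hm y) \<partial>\<tau>) = 0" if r: "r > 0" for r
      proof -
        let ?A = "ball y0 r"
        have Ab: "?A \<in> sets borel" by simp
        note L = L_N[OF ta(1) mu(1) nu'(1) ta(2) mu(2) nu'(2) Kb K(2) Ab cge cm mnu fm q1 fb]
        have i2: "integrable \<tau> (\<lambda>y. indicator ?A y * (Hn y - Hm y))"
          using integrable_real_mult_indicator[OF _ Bochner_Integration.integrable_diff[OF intH(2) intH(1)], of ?A] ta(2)
          by (simp add: mult.commute)
        have "(\<integral>y. Hm y \<partial>\<tau>) + (\<integral>y. indicator ?A y * (Hn y - Hm y) \<partial>\<tau>)
              = (\<integral>y. Hm y + indicator ?A y * (Hn y - Hm y) \<partial>\<tau>)"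
          using intH(1) i2 by simp
        also have "\<dots> = integral\<^sup>L (NA ?A) f" using L(2) unfolding NA_def Hm_def Hn_def by simp
        also have "\<dots> = integral\<^sup>L (conv \<tau> \<mu>) f" using NAeq[OF r] by simp
        also have "\<dots> = (\<integral>y. Hm y \<partial>\<tau>)" using L(5) unfolding Hm_def by simp
        finally show ?thesis by simp
      qed
      have hb: "\<bar>(\<integral>x. f (x + y) \<partial>MM) - (\<integral>x. f (x + y0) \<partial>MM)\<bar> \<le> \<bar>L\<bar> * r * measure MM UNIV"
        if "finite_measure MM" "sets MM = sets borel" "y \<in> ball y0 r" for MM y r
      proof -
        have sp': "space MM = UNIV" using sets_eq_imp_space_eq[OF that(2)] by simp
        have i1: "integrable MM (\<lambda>_. 1::real)" using finite_measure.integrable_const[OF that(1)] .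
        have "\<bar>(\<integral>x. f (x + y) \<partial>MM) - (\<integral>x. f (x + y0) \<partial>MM)\<bar> = \<bar>\<integral>x. f (x + y) - f (x + y0) \<partial>MM\<bar>"
          using fint[OF that(2) i1, of y] fint[OF that(2) i1, of y0] by simp
        also have "\<dots> \<le> (\<integral>x. \<bar>L\<bar> * r \<partial>MM)"
        proof (rule integral_abs_bound_integral)
          show "integrable MM (\<lambda>x. f (x + y) - f (x + y0))"
            using fint[OF that(2) i1, of y] fint[OF that(2) i1, of y0] by simp
          show "integrable MM (\<lambda>x. \<bar>L\<bar> * r)" using finite_measure.integrable_const[OF that(1)] .
          fix x
          have "\<bar>f (x + y) - f (x + y0)\<bar> = \<bar>g (x + (y - y0)) - g x\<bar>" unfolding f_def by (simp add: algebra_simps)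
          also have "\<dots> \<le> L * dist (x + (y - y0)) x" by (rule g(2))
          also have "\<dots> \<le> \<bar>L\<bar> * dist (x + (y - y0)) x" by (intro mult_right_mono) auto
          also have "dist (x + (y - y0)) x = dist y y0" by (simp add: dist_norm)
          also have "\<bar>L\<bar> * dist y y0 \<le> \<bar>L\<bar> * r" using that(3) by (intro mult_left_mono) (auto simp: dist_commute)
          finally show "\<bar>f (x + y) - f (x + y0)\<bar> \<le> \<bar>L\<bar> * r" .
        qed
        also have "\<dots> = \<bar>L\<bar> * r * measure MM UNIV" using sp' by simp
        finally show ?thesis .
      qed
      have "Hn y0 - Hm y0 = 0"
      proof (rule avg_lemma[OF ta(1) ta(2) _ z y0])
        show "integrable \<tau> (\<lambda>y. Hn y - Hm y)" using intH by simp
        show "\<bar>(Hn y - Hm y) - (Hn y0 - Hm y0)\<bar> \<le> (2 * \<bar>L\<bar> * m) * r" if "r > 0" "y \<in> ball y0 r" for r y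
        proof -
          have "\<bar>(Hn y - Hm y) - (Hn y0 - Hm y0)\<bar> \<le> \<bar>Hn y - Hn y0\<bar> + \<bar>Hm y - Hm y0\<bar>" by simp
          also have "\<dots> \<le> \<bar>L\<bar> * r * measure \<nu> UNIV + \<bar>L\<bar> * r * measure \<mu> UNIV"
            unfolding Hn_def Hm_def
            by (intro add_mono hb[OF nu'(1) nu'(2) that(2)] hb[OF mu(1) mu(2) that(2)])
          also have "\<dots> = (2 * \<bar>L\<bar> * m) * r" using mnu unfolding m_def by simp
          finally show ?thesis .
        qed
      qed
      then show ?thesis unfolding Hn_def Hm_def f_def by simp
    qed
    have "\<mu> = \<nu>" by (rule eq_from_lip[OF mu(1) nu'(1) mu(2) nu'(2) lip])
    with nu(2) show False by simp
  qed
qed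


end
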